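(* Let $T>0$, $M>0$ and $\varepsilon\in(\varepsilon_j)_{j\in\mathbb N}$ be such that $\|u_{0\varepsilon}-\varepsilon\|_{\Phi,\infty}<\infty$. Then any solution $u_\varepsilon$ of the regularized problem which satisfies $\int_\Omega|\nabla u_\varepsilon(t)|^2\le M$ for all $t\in[0,T]$ fulfils $$\|u_\varepsilon(t)-\varepsilon\|_{\Phi,\infty}\le\max\{M,\|u_{0\varepsilon}-\varepsilon\|_{\Phi,\infty}\}\quad\text{for } t\in[0,T].$$
   Context: $\Omega\subset\mathbb{R}^N$ is a bounded smooth domain; $\Phi$ solves $-\Delta\Phi=1$ in $\Omega$, $\Phi=0$ on $\partial\Omega$, and $\|v\|_{\Phi,\infty}:=\operatorname{ess\,sup}_\Omega|v/\Phi|$. $(\varepsilon_j)\subset(0,1)$ decreases to $0$; $\rho_\varepsilon(z):=\min\{z,1/\varepsilon\}$; $(u_{0\varepsilon})_{\varepsilon\in(\varepsilon_j)}\subset C^3(\bar\Omega)$ with $u_{0\varepsilon}\ge\varepsilon$ in $\Omega$, $u_{0\varepsilon}=\varepsilon$ and $\Delta u_{0\varepsilon}=-\int_\Omega|\nabla u_{0\varepsilon}|^2$ on $\partial\Omega$. The regularized problem is $u_{\varepsilon t}=u_\varepsilon\Delta u_\varepsilon+u_\varepsilon\rho_\varepsilon(\int_\Omega|\nabla u_\varepsilon|^2)$ in $\Omega\times(0,\infty)$, $u_\varepsilon=\varepsilon$ on $\partial\Omega$, $u_\varepsilon(\cdot,0)=u_{0\varepsilon}$, with classical solutions in $C^{2,1}(\bar\Omega\times[0,\infty))$.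 *)

theory Defs
  imports "HOL-Analysis.Analysis" "HOL-Probability.Essential_Supremum"
begin

text \<open>Functions on R^N are modelled as real ^ 'n => real (N = CARD('n)).\<close>

definition pd :: "'n::finite \<Rightarrow> (real^'n \<Rightarrow> real) \<Rightarrow> real^'n \<Rightarrow> real" where
  "pd i f x = deriv (\<lambda>s. f (x + s *\<^sub>R axis i 1)) 0"

fun dd :: "'n::finite list \<Rightarrow> (real^'n \<Rightarrow> real) \<Rightarrow> real^'n \<Rightarrow> real" where
  "dd [] f = f"
| "dd (i # is) f = pd i (dd is f)"

definition Ck :: "nat \<Rightarrow> (real^'n::finite) set \<Rightarrow> (real^'n \<Rightarrow> real) \<Rightarrow> bool" where
  "Ck k U f \<longleftrightarrow>
     (\<forall>is. length is < k \<longrightarrow> (\<forall>i. \<forall>x\<in>U. (\<lambda>s. dd is f (x + s *\<^sub>R axis i 1)) differentiable (at 0)))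
   \<and> (\<forall>is. length is \<le> k \<longrightarrow> continuous_on U (dd is f))"

definition Ck_bar :: "nat \<Rightarrow> (real^'n::finite) set \<Rightarrow> (real^'n \<Rightarrow> real) \<Rightarrow> bool" where
  "Ck_bar k \<Omega> f \<longleftrightarrow> Ck k \<Omega> f \<and>
     (\<forall>is. length is \<le> k \<longrightarrow> (\<exists>h. continuous_on (closure \<Omega>) h \<and> (\<forall>x\<in>\<Omega>. h x = dd is f x)))"

definition smooth_on :: "(real^'n::finite) set \<Rightarrow> (real^'n \<Rightarrow> real) \<Rightarrow> bool" where
  "smooth_on U f \<longleftrightarrow> (\<forall>k. Ck k U f)"

definition grad :: "(real^'n::finite \<Rightarrow> real) \<Rightarrow> real^'n \<Rightarrow> real^'n" where
  "grad f x = (\<chi> i. pd i f x)"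

definition lap :: "(real^'n::finite \<Rightarrow> real) \<Rightarrow> real^'n \<Rightarrow> real" where
  "lap f x = (\<Sum>i\<in>UNIV. dd [i, i] f x)"

definition dirichlet :: "(real^'n::finite) set \<Rightarrow> (real^'n \<Rightarrow> real) \<Rightarrow> real" where
  "dirichlet \<Omega> f = integral \<Omega> (\<lambda>x. (norm (grad f x))\<^sup>2)"

definition smooth_bounded_domain :: "(real^'n::finite) set \<Rightarrow> bool" where
  "smooth_bounded_domain \<Omega> \<longleftrightarrow> open \<Omega> \<and> connected \<Omega> \<and> bounded \<Omega> \<and> \<Omega> \<noteq> {} \<and>
     (\<forall>p\<in>frontier \<Omega>. \<exists>U g. open U \<and> p \<in> U \<and> smooth_on U g \<and>
        (\<forall>x\<in>U. grad g x \<noteq> 0) \<and> \<Omega> \<inter> U = {x\<in>U. g x < 0})"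

definition torsion_function :: "(real^'n::finite) set \<Rightarrow> (real^'n \<Rightarrow> real) \<Rightarrow> bool" where
  "torsion_function \<Omega> \<Phi> \<longleftrightarrow> Ck 2 \<Omega> \<Phi> \<and> continuous_on (closure \<Omega>) \<Phi> \<and>
     (\<forall>x\<in>\<Omega>. - lap \<Phi> x = 1) \<and> (\<forall>x\<in>frontier \<Omega>. \<Phi> x = 0)"

definition phi_norm :: "(real^'n::finite) set \<Rightarrow> (real^'n \<Rightarrow> real) \<Rightarrow> (real^'n \<Rightarrow> real) \<Rightarrow> ereal" where
  "phi_norm \<Omega> \<Phi> v = esssup (lebesgue_on \<Omega>) (\<lambda>x. ereal \<bar>v x / \<Phi> x\<bar>)"

definition rho :: "real \<Rightarrow> real \<Rightarrow> real" where
  "rho \<epsilon> z = min z (1 / \<epsilon>)"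

definition C21_bar :: "(real^'n::finite) set \<Rightarrow> (real^'n \<Rightarrow> real \<Rightarrow> real) \<Rightarrow> bool" where
  "C21_bar \<Omega> u \<longleftrightarrow>
     continuous_on (closure \<Omega> \<times> {0..}) (\<lambda>(x, t). u x t) \<and>
     (\<forall>t\<ge>0. Ck 2 \<Omega> (\<lambda>x. u x t)) \<and>
     (\<forall>is. length is \<le> 2 \<longrightarrow> (\<exists>h. continuous_on (closure \<Omega> \<times> {0..}) h \<and>
         (\<forall>x\<in>\<Omega>. \<forall>t\<ge>0. h (x, t) = dd is (\<lambda>y. u y t) x))) \<and>
     (\<exists>h. continuous_on (closure \<Omega> \<times> {0..}) h \<and>
         (\<forall>x\<in>\<Omega>. \<forall>t>0. ((\<lambda>s. u x s) has_real_derivative h (x, t)) (at t)))"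

definition admissible_initial :: "(real^'n::finite) set \<Rightarrow> real \<Rightarrow> (real^'n \<Rightarrow> real) \<Rightarrow> bool" where
  "admissible_initial \<Omega> \<epsilon> u0 \<longleftrightarrow> Ck_bar 3 \<Omega> u0 \<and> continuous_on (closure \<Omega>) u0 \<and>
     (\<forall>x\<in>\<Omega>. u0 x \<ge> \<epsilon>) \<and> (\<forall>x\<in>frontier \<Omega>. u0 x = \<epsilon>) \<and>
     (\<forall>x\<in>frontier \<Omega>. ((lap u0) \<longlongrightarrow> - dirichlet \<Omega> u0) (at x within \<Omega>))"

definition reg_solution :: "(real^'n::finite) set \<Rightarrow> real \<Rightarrow> (real^'n \<Rightarrow> real) \<Rightarrow> (real^'n \<Rightarrow> real \<Rightarrow> real) \<Rightarrow> bool" where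
  "reg_solution \<Omega> \<epsilon> u0 u \<longleftrightarrow> C21_bar \<Omega> u \<and>
     (\<forall>x\<in>\<Omega>. \<forall>t>0. ((\<lambda>s. u x s) has_real_derivative
         (u x t * lap (\<lambda>y. u y t) x + u x t * rho \<epsilon> (dirichlet \<Omega> (\<lambda>y. u y t)))) (at t)) \<and>
     (\<forall>x\<in>frontier \<Omega>. \<forall>t\<ge>0. u x t = \<epsilon>) \<and>
     (\<forall>x\<in>closure \<Omega>. u x 0 = u0 x)"

end

theory Submission
  imports Defs
begin

lemma second_deriv_max:
  fixes g g' :: "real \<Rightarrow> real"
  assumes r: "r > 0"
    and dg: "\<And>s. \<bar>s\<bar> < r \<Longrightarrow> (g has_real_derivative g' s) (at s)"
    and dg': "(g' has_real_derivative d) (at 0)"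
    and mx: "\<And>s. \<bar>s\<bar> < r \<Longrightarrow> g s \<le> g 0"
  shows "d \<le> 0"
proof (rule ccontr)
  assume "\<not> d \<le> 0" hence dp: "d > 0" by simp
  have g'0: "g' 0 = 0"
    using DERIV_local_max[OF dg[of 0] r] r mx by auto
  obtain e where e: "e > 0" "\<And>h. h > 0 \<Longrightarrow> h < e \<Longrightarrow> g' 0 < g' (0 + h)"
    using DERIV_pos_inc_right[OF dg' dp] by blast
  define h where "h = min e r / 2"
  have h: "h > 0" "h < e" "h < r" using e r by (auto simp: h_def)
  have "\<exists>z. 0 < z \<and> z < h \<and> g h - g 0 = (h - 0) * g' z"
    by (rule MVT2) (use h dg in auto)
  then obtain z where z: "0 < z" "z < h" "g h - g 0 = h * g' z" by auto
  have "g' z > 0" using e(2)[of z] z h g'0 by auto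
  hence "g h - g 0 > 0" using z h by simp
  moreover have "g h \<le> g 0" using mx[of h] h by simp
  ultimately show False by simp
qed

lemma dd_line:
  fixes F :: "real^'n::finite \<Rightarrow> real"
  assumes Ck: "Ck 2 \<Omega> F" and op: "open \<Omega>" and x: "x \<in> \<Omega>"
  shows "\<exists>r>0. (\<forall>s. \<bar>s\<bar> < r \<longrightarrow> ((\<lambda>s. F (x + s *\<^sub>R axis i 1)) has_real_derivative
            pd i F (x + s *\<^sub>R axis i 1)) (at s)) \<and>
        ((\<lambda>s. pd i F (x + s *\<^sub>R axis i 1)) has_real_derivative dd [i,i] F x) (at 0)
        \<and> (\<forall>s. \<bar>s\<bar> < r \<longrightarrow> x + s *\<^sub>R axis i 1 \<in> \<Omega>)"
proof -
  obtain r where r: "r > 0" "ball x r \<subseteq> \<Omega>" using op x open_contains_ball by blast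
  have inb: "x + s *\<^sub>R axis i 1 \<in> \<Omega>" if "\<bar>s\<bar> < r" for s
    using r that by (auto simp: dist_norm intro!: subsetD[OF r(2)])
  have D0: "\<And>y. y \<in> \<Omega> \<Longrightarrow> (\<lambda>s. F (y + s *\<^sub>R axis i 1)) differentiable (at 0)"
    using Ck unfolding Ck_def by (metis dd.simps(1) list.size(3) zero_less_numeral)
  have D1: "(\<lambda>s. pd i F (x + s *\<^sub>R axis i 1)) differentiable (at 0)"
  proof -
    have "length [i] < 2" by simp
    with Ck x have "(\<lambda>s. dd [i] F (x + s *\<^sub>R axis i 1)) differentiable (at 0)"
      unfolding Ck_def by blast
    thus ?thesis by simp
  qed
  have A: "((\<lambda>s. F (x + s *\<^sub>R axis i 1)) has_real_derivative
            pd i F (x + s *\<^sub>R axis i 1)) (at s)" if "\<bar>s\<bar> < r" for s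
  proof -
    let ?y = "x + s *\<^sub>R axis i 1"
    have "((\<lambda>t. F (?y + t *\<^sub>R axis i 1)) has_real_derivative pd i F ?y) (at 0)"
      unfolding pd_def using D0[OF inb[OF that]] DERIV_deriv_iff_real_differentiable by blast
    moreover have "(\<lambda>t. F (?y + t *\<^sub>R axis i 1)) = (\<lambda>t. (\<lambda>s. F (x + s *\<^sub>R axis i 1)) (t + s))"
      by (auto simp: algebra_simps scaleR_add_left)
    ultimately have "((\<lambda>t. (\<lambda>s. F (x + s *\<^sub>R axis i 1)) (t + s)) has_real_derivative pd i F ?y) (at 0)"
      by simp
    thus ?thesis using DERIV_shift[of "\<lambda>s. F (x + s *\<^sub>R axis i 1)" "pd i F ?y" 0 s] by simp
  qed
  have B: "((\<lambda>s. pd i F (x + s *\<^sub>R axis i 1)) has_real_derivative dd [i,i] F x) (at 0)"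
    using D1 DERIV_deriv_iff_real_differentiable by (fastforce simp: pd_def[of i "pd i F"])
  show ?thesis using A B inb r by blast
qed

lemma lap_compare:
  fixes F G :: "real^'n::finite \<Rightarrow> real"
  assumes CF: "Ck 2 \<Omega> F" and CG: "Ck 2 \<Omega> G" and op: "open \<Omega>" and x: "x \<in> \<Omega>"
    and e: "e > 0" and mx: "\<And>y. y \<in> ball x e \<Longrightarrow> a * F y + b * G y \<le> a * F x + b * G x"
  shows "a * lap F x + b * lap G x \<le> 0"
proof -
  have each: "a * dd [i,i] F x + b * dd [i,i] G x \<le> 0" for i
  proof -
    obtain r1 where r1: "r1 > 0" "\<forall>s. \<bar>s\<bar> < r1 \<longrightarrow> ((\<lambda>s. F (x + s *\<^sub>R axis i 1)) has_real_derivative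
            pd i F (x + s *\<^sub>R axis i 1)) (at s)"
        "((\<lambda>s. pd i F (x + s *\<^sub>R axis i 1)) has_real_derivative dd [i,i] F x) (at 0)"
      using dd_line[OF CF op x, of i] by blast
    obtain r2 where r2: "r2 > 0" "\<forall>s. \<bar>s\<bar> < r2 \<longrightarrow> ((\<lambda>s. G (x + s *\<^sub>R axis i 1)) has_real_derivative
            pd i G (x + s *\<^sub>R axis i 1)) (at s)"
        "((\<lambda>s. pd i G (x + s *\<^sub>R axis i 1)) has_real_derivative dd [i,i] G x) (at 0)"
      using dd_line[OF CG op x, of i] by blast
    define r where "r = min e (min r1 r2)"
    have r: "r > 0" using r1 r2 e by (simp add: r_def)
    show ?thesis
    proof (rule second_deriv_max[OF r, where g = "\<lambda>s. a * F (x + s *\<^sub>R axis i 1) + b * G (x + s *\<^sub>R axis i 1)"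
          and g' = "\<lambda>s. a * pd i F (x + s *\<^sub>R axis i 1) + b * pd i G (x + s *\<^sub>R axis i 1)"])
      fix s :: real assume s: "\<bar>s\<bar> < r"
      show "((\<lambda>s. a * F (x + s *\<^sub>R axis i 1) + b * G (x + s *\<^sub>R axis i 1)) has_real_derivative
          a * pd i F (x + s *\<^sub>R axis i 1) + b * pd i G (x + s *\<^sub>R axis i 1)) (at s)"
        using s r1(2) r2(2) by (auto simp: r_def intro!: derivative_eq_intros)
      have "x + s *\<^sub>R axis i 1 \<in> ball x e" using s by (auto simp: r_def dist_norm)
      thus "a * F (x + s *\<^sub>R axis i 1) + b * G (x + s *\<^sub>R axis i 1) \<le>
            a * F (x + 0 *\<^sub>R axis i 1) + b * G (x + 0 *\<^sub>R axis i 1)"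
        using mx by simp
    next
      show "((\<lambda>s. a * pd i F (x + s *\<^sub>R axis i 1) + b * pd i G (x + s *\<^sub>R axis i 1)) has_real_derivative
          a * dd [i,i] F x + b * dd [i,i] G x) (at 0)"
        using r1(3) r2(3) by (auto intro!: derivative_eq_intros)
    qed
  qed
  have "a * lap F x + b * lap G x = (\<Sum>i\<in>UNIV. a * dd [i,i] F x + b * dd [i,i] G x)"
    by (simp add: lap_def sum.distrib sum_distrib_left)
  also have "\<dots> \<le> 0" by (rule sum_nonpos) (use each in auto)
  finally show ?thesis .
qed

lemma cont_slice:
  fixes h :: "'a::topological_space \<Rightarrow> real \<Rightarrow> real"
  assumes "continuous_on (K \<times> I) (\<lambda>(x, t). h x t)" "y \<in> K" "J \<subseteq> I"
  shows "continuous_on J (h y)"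
proof -
  have "continuous_on J ((\<lambda>(x, t). h x t) \<circ> (\<lambda>s. (y, s)))"
    by (rule continuous_on_compose) (use assms in \<open>auto intro!: continuous_intros continuous_on_subset[OF assms(1)]\<close>)
  thus ?thesis by (simp add: o_def)
qed

lemma first_touch:
  fixes h :: "real^'n::finite \<Rightarrow> real \<Rightarrow> real"
  assumes op: "open \<Omega>" and bd: "bounded \<Omega>"
    and cont: "continuous_on (closure \<Omega> \<times> {0..T}) (\<lambda>(x, t). h x t)"
    and init: "\<And>x. x \<in> closure \<Omega> \<Longrightarrow> h x 0 < 0"
    and bdry: "\<And>x t. x \<in> frontier \<Omega> \<Longrightarrow> t \<in> {0..T} \<Longrightarrow> h x t < 0"
    and x1: "x1 \<in> closure \<Omega>" and t1: "t1 \<in> {0..T}" and h1: "h x1 t1 \<ge> 0"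
  shows "\<exists>x\<in>\<Omega>. \<exists>t. 0 < t \<and> t \<le> T \<and> h x t = 0 \<and> (\<forall>y\<in>closure \<Omega>. h y t \<le> 0)
            \<and> (\<forall>s. 0 \<le> s \<and> s < t \<longrightarrow> h x s < 0)"
proof -
  define K where "K = closure \<Omega> \<times> {0..T}"
  define S where "S = K \<inter> (\<lambda>(x, t). h x t) -` {0..}"
  have cK: "compact K" unfolding K_def using bd by (auto intro!: compact_Times compact_closure[THEN iffD2])
  have "closed S" unfolding S_def
    by (rule continuous_closed_preimage) (use cont cK in \<open>auto simp: K_def intro: compact_imp_closed\<close>)
  hence cS: "compact S" using cK unfolding S_def
    by (metis Int_absorb1 Int_lower1 compact_Int_closed inf_commute)
  have nS: "S \<noteq> {}" proof
    assume "S = {}"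
    moreover have "(x1, t1) \<in> S" using x1 t1 h1 by (auto simp: S_def K_def)
    ultimately show False by simp
  qed
  have "\<exists>p\<in>S. \<forall>q\<in>S. snd p \<le> snd q"
    by (rule continuous_attains_inf[OF cS nS]) (intro continuous_on_snd continuous_on_id)
  then obtain p where p: "p \<in> S" "\<And>q. q \<in> S \<Longrightarrow> snd p \<le> snd q" by blast
  obtain x t where pxt: "p = (x, t)" by (cases p)
  have xc: "x \<in> closure \<Omega>" and tT: "t \<in> {0..T}" and hx: "h x t \<ge> 0"
    using p(1) by (auto simp: S_def K_def pxt)
  have minS: "\<And>y s. y \<in> closure \<Omega> \<Longrightarrow> s \<in> {0..T} \<Longrightarrow> h y s \<ge> 0 \<Longrightarrow> t \<le> s"
    using p(2) by (force simp: S_def K_def pxt)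
  have t0: "t > 0" using init[OF xc] hx tT by (cases "t = 0") auto
  have xO: "x \<in> \<Omega>" using xc bdry[OF _ tT, of x] hx closure_Un_frontier[of \<Omega>] by auto
  have le: "h y t \<le> 0" if y: "y \<in> closure \<Omega>" for y
  proof (rule ccontr)
    assume "\<not> h y t \<le> 0"
    hence "h y 0 \<le> 0" "0 \<le> h y t" using init[OF y] by auto
    moreover have "continuous_on {0..t} (h y)" by (rule cont_slice[OF cont y]) (use tT in auto)
    ultimately obtain s where s: "0 \<le> s" "s \<le> t" "h y s = 0"
      using IVT'[of "h y" 0 0 t] t0 by auto
    hence "t \<le> s" using minS[OF y, of s] tT by auto
    with s \<open>\<not> h y t \<le> 0\<close> show False by auto
  qed
  have lt: "h x s < 0" if "0 \<le> s" "s < t" for s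
    using minS[OF xc, of s] that tT by force
  show ?thesis using xO t0 tT hx le[OF xc] le lt by (intro bexI[of _ x] exI[of _ t]) auto
qed

lemma AE_open_all:
  fixes \<Omega> :: "(real^'n::finite) set"
  assumes op: "open \<Omega>" and ae: "AE x in lebesgue_on \<Omega>. P x" and ob: "open {x\<in>\<Omega>. \<not> P x}"
  shows "\<forall>x\<in>\<Omega>. P x"
proof -
  have sp: "space (lebesgue_on \<Omega>) = \<Omega>" by simp
  obtain N where N: "{x \<in> \<Omega>. \<not> P x} \<subseteq> N" "N \<in> null_sets (lebesgue_on \<Omega>)"
    using ae by (auto elim!: AE_E simp: sp null_sets_def)
  have Ol: "\<Omega> \<in> sets lebesgue" using op by simp
  have "N \<in> null_sets lebesgue" using N(2) null_sets_restrict_space[OF Ol] by auto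
  moreover have "{x \<in> \<Omega>. \<not> P x} \<in> sets lebesgue" using ob by simp
  ultimately have "{x \<in> \<Omega>. \<not> P x} \<in> null_sets lebesgue" using N(1) null_sets_subset by blast
  hence "negligible {x \<in> \<Omega>. \<not> P x}" by (simp add: negligible_iff_null_sets)
  hence "{x \<in> \<Omega>. \<not> P x} = {}" using open_not_negligible ob by blast
  thus ?thesis by auto
qed

lemma cont_slice2:
  fixes h :: "'a::topological_space \<Rightarrow> real \<Rightarrow> real"
  assumes "continuous_on (K \<times> I) (\<lambda>(x, t). h x t)" "t \<in> I" "J \<subseteq> K"
  shows "continuous_on J (\<lambda>x. h x t)"
proof -
  have "continuous_on J ((\<lambda>(x, t). h x t) \<circ> (\<lambda>x. (x, t)))"
    by (rule continuous_on_compose) (use assms in \<open>auto intro!: continuous_intros continuous_on_subset[OF assms(1)]\<close>)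
  thus ?thesis by (simp add: o_def)
qed

lemma time_touch:
  fixes g :: "real \<Rightarrow> real"
  assumes d: "(g has_real_derivative D) (at t)" and t: "t > 0" and g0: "g t = 0"
    and lt: "\<And>s. 0 \<le> s \<Longrightarrow> s < t \<Longrightarrow> g s < 0"
  shows "D \<ge> 0"
proof (rule ccontr)
  assume "\<not> D \<ge> 0" hence "D < 0" by simp
  then obtain e where e: "e > 0" "\<And>h. h > 0 \<Longrightarrow> h < e \<Longrightarrow> g t < g (t - h)"
    using DERIV_neg_dec_left[OF d] by blast
  define h where "h = min e t / 2"
  have h: "h > 0" "h < e" "h < t" using e t by (auto simp: h_def)
  have "g t < g (t - h)" using e(2) h by auto
  moreover have "g (t - h) < 0" using lt[of "t - h"] h by auto
  ultimately show False using g0 by simp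
qed

lemma dirichlet_nonneg: "dirichlet \<Omega> f \<ge> 0"
proof (cases "(\<lambda>x. (norm (grad f x))\<^sup>2) integrable_on \<Omega>")
  case True thus ?thesis unfolding dirichlet_def by (rule integral_nonneg) simp
next
  case False thus ?thesis unfolding dirichlet_def by (simp add: not_integrable_integral)
qed

theorem lemma2p7:
  fixes \<Omega> :: "(real^'n::finite) set"
    and \<Phi> :: "real^'n \<Rightarrow> real"
    and eps :: "nat \<Rightarrow> real"
    and u0 :: "real \<Rightarrow> real^'n \<Rightarrow> real"
    and u :: "real^'n \<Rightarrow> real \<Rightarrow> real"
    and T M :: real and j :: nat
  assumes dom: "smooth_bounded_domain \<Omega>"
    and Phi: "torsion_function \<Omega> \<Phi>"
    and eps_range: "\<And>k. eps k \<in> {0<..<1}"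
    and eps_dec: "decseq eps"
    and eps_lim: "eps \<longlonglongrightarrow> 0"
    and init: "\<And>k. admissible_initial \<Omega> (eps k) (u0 (eps k))"
    and T: "T > 0" and M: "M > 0"
    and fin: "phi_norm \<Omega> \<Phi> (\<lambda>x. u0 (eps j) x - eps j) < \<infinity>"
    and sol: "reg_solution \<Omega> (eps j) (u0 (eps j)) u"
    and energy: "\<And>t. t \<in> {0..T} \<Longrightarrow> dirichlet \<Omega> (\<lambda>x. u x t) \<le> M"
  shows "\<forall>t\<in>{0..T}. phi_norm \<Omega> \<Phi> (\<lambda>x. u x t - eps j)
           \<le> max (ereal M) (phi_norm \<Omega> \<Phi> (\<lambda>x. u0 (eps j) x - eps j))"
proof -
  define e where "e = eps j"
  define v0 where "v0 = u0 (eps j)"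
  have e: "e > 0" "e < 1" using eps_range[of j] by (auto simp: e_def)
  have op: "open \<Omega>" and bd: "bounded \<Omega>" and ne: "\<Omega> \<noteq> {}"
    using dom by (auto simp: smooth_bounded_domain_def)
  have clos: "closure \<Omega> = \<Omega> \<union> frontier \<Omega>" by (rule closure_Un_frontier)
  have fc: "frontier \<Omega> \<subseteq> closure \<Omega>" by (simp add: frontier_def)
  have CP: "Ck 2 \<Omega> \<Phi>" and cP: "continuous_on (closure \<Omega>) \<Phi>"
    and lP: "\<And>x. x \<in> \<Omega> \<Longrightarrow> lap \<Phi> x = -1" and fP: "\<And>x. x \<in> frontier \<Omega> \<Longrightarrow> \<Phi> x = 0"
    using Phi by (auto simp: torsion_function_def)
  have cK: "compact (closure \<Omega>)" using bd by (simp add: compact_closure)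
  have neK: "closure \<Omega> \<noteq> {}" using ne by simp
  have nomin: False if x: "x \<in> \<Omega>" and mn: "\<And>y. y \<in> closure \<Omega> \<Longrightarrow> \<Phi> x \<le> \<Phi> y" for x
  proof -
    obtain r where r: "r > 0" "ball x r \<subseteq> \<Omega>" using op x open_contains_ball by blast
    have "(-1) * lap \<Phi> x + 0 * lap \<Phi> x \<le> 0"
      by (rule lap_compare[OF CP CP op x r(1)]) (use r mn closure_subset in force)
    thus False using lP[OF x] by simp
  qed
  obtain xm where xm: "xm \<in> closure \<Omega>" "\<And>y. y \<in> closure \<Omega> \<Longrightarrow> \<Phi> xm \<le> \<Phi> y"
    using continuous_attains_inf[OF cK neK cP] by blast
  have Pnn: "\<Phi> x \<ge> 0" if "x \<in> closure \<Omega>" for x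
  proof -
    have "xm \<notin> \<Omega>" using nomin xm by blast
    hence "xm \<in> frontier \<Omega>" using xm clos by auto
    thus ?thesis using xm(2)[OF that] fP by auto
  qed
  have Ppos: "\<Phi> x > 0" if x: "x \<in> \<Omega>" for x
  proof (rule ccontr)
    assume "\<not> \<Phi> x > 0"
    hence "\<Phi> x = 0" using Pnn[of x] x closure_subset by force
    thus False using nomin[OF x] Pnn by auto
  qed
  have contU: "continuous_on (closure \<Omega> \<times> {0..}) (\<lambda>(x, t). u x t)"
    and CU: "\<And>t. t \<ge> 0 \<Longrightarrow> Ck 2 \<Omega> (\<lambda>x. u x t)"
    and eqU: "\<And>x t. x \<in> \<Omega> \<Longrightarrow> t > 0 \<Longrightarrow> ((\<lambda>s. u x s) has_real_derivative
         (u x t * lap (\<lambda>y. u y t) x + u x t * rho e (dirichlet \<Omega> (\<lambda>y. u y t)))) (at t)"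
    and bU: "\<And>x t. x \<in> frontier \<Omega> \<Longrightarrow> t \<ge> 0 \<Longrightarrow> u x t = e"
    and iU: "\<And>x. x \<in> closure \<Omega> \<Longrightarrow> u x 0 = v0 x"
    using sol by (auto simp: reg_solution_def C21_bar_def e_def v0_def)
  have contUT: "continuous_on (closure \<Omega> \<times> {0..T}) (\<lambda>(x, t). u x t)"
    by (rule continuous_on_subset[OF contU]) auto
  have v0ge: "\<And>x. x \<in> \<Omega> \<Longrightarrow> v0 x \<ge> e" and v0b: "\<And>x. x \<in> frontier \<Omega> \<Longrightarrow> v0 x = e"
    and cv0: "continuous_on (closure \<Omega>) v0"
    using init[of j] by (auto simp: admissible_initial_def e_def v0_def)
  have v0ge': "v0 x \<ge> e" if "x \<in> closure \<Omega>" for x using that clos v0ge v0b by fastforce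
  have rho_le: "rho e (dirichlet \<Omega> (\<lambda>y. u y t)) \<le> M" if "t \<in> {0..T}" for t
    using energy[OF that] by (simp add: rho_def e_def[symmetric])
  have rho_ge: "rho e (dirichlet \<Omega> (\<lambda>y. u y t)) \<ge> 0" for t
    using dirichlet_nonneg e by (simp add: rho_def)
  define L0 where "L0 = phi_norm \<Omega> \<Phi> (\<lambda>x. v0 x - e)"
  define Lr where "Lr = real_of_ereal (max (ereal M) L0)"
  have L0fin: "L0 < \<infinity>" using fin by (simp add: L0_def v0_def e_def)
  have Lr: "ereal Lr = max (ereal M) L0" unfolding Lr_def
    using L0fin by (cases L0) (auto simp: max_def)
  have LrM: "Lr \<ge> M" using Lr by (metis ereal_less_eq(3) max.cobounded1)
  have L0Lr: "L0 \<le> ereal Lr" using Lr by simp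
  have v0bound: "v0 x - e \<le> Lr * \<Phi> x" if x: "x \<in> closure \<Omega>" for x
  proof (cases "x \<in> \<Omega>")
    case False thus ?thesis using x clos v0b fP by auto
  next
    case True
    define f where "f = (\<lambda>x. \<bar>(v0 x - e) / \<Phi> x\<bar>)"
    have ae: "AE x in lebesgue_on \<Omega>. f x \<le> Lr"
    proof -
      have "AE x in lebesgue_on \<Omega>. ereal (f x) \<le> L0"
        unfolding L0_def phi_norm_def f_def by (rule esssup_AE)
      thus ?thesis by eventually_elim (use L0Lr in \<open>metis ereal_less_eq(3) order.trans\<close>)
    qed
    have cf: "continuous_on \<Omega> f" unfolding f_def
      using Ppos by (auto intro!: continuous_intros continuous_on_subset[OF cv0] continuous_on_subset[OF cP] closure_subset dest: Ppos)
    have "open (\<Omega> \<inter> f -` {Lr<..})" by (rule continuous_open_preimage[OF cf op]) auto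
    moreover have "\<Omega> \<inter> f -` {Lr<..} = {x\<in>\<Omega>. \<not> f x \<le> Lr}" by auto
    ultimately have "\<forall>x\<in>\<Omega>. f x \<le> Lr" using AE_open_all[OF op ae] by auto
    hence "\<bar>(v0 x - e) / \<Phi> x\<bar> \<le> Lr" using True by (simp add: f_def)
    hence "(v0 x - e) / \<Phi> x \<le> Lr" by (meson abs_ge_self order.trans)
    thus ?thesis using Ppos[OF True] by (simp add: divide_le_eq mult.commute)
  qed
  have upper: "u x t \<le> e + Lr * \<Phi> x + \<delta> * (1 + t)"
    if dp: "\<delta> > 0" and x: "x \<in> closure \<Omega>" and t: "t \<in> {0..T}" for \<delta> x t
  proof (rule ccontr)
    assume nc: "\<not> ?thesis"
    define h where "h = (\<lambda>x t. u x t - (e + Lr * \<Phi> x + \<delta> * (1 + t)))"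
    have ch: "continuous_on (closure \<Omega> \<times> {0..T}) (\<lambda>(x, t). h x t)"
    proof -
      have c1: "continuous_on (closure \<Omega> \<times> {0..T}) (\<lambda>p. \<Phi> (fst p))"
        by (rule continuous_on_compose2[OF cP]) (auto intro!: continuous_intros)
      have "continuous_on (closure \<Omega> \<times> {0..T}) (\<lambda>p. (\<lambda>(x, t). u x t) p - (e + Lr * \<Phi> (fst p) + \<delta> * (1 + snd p)))"
        by (intro continuous_intros contUT c1)
      thus ?thesis by (simp add: h_def case_prod_beta)
    qed
    have "\<exists>x\<in>\<Omega>. \<exists>t. 0 < t \<and> t \<le> T \<and> h x t = 0 \<and> (\<forall>y\<in>closure \<Omega>. h y t \<le> 0)
            \<and> (\<forall>s. 0 \<le> s \<and> s < t \<longrightarrow> h x s < 0)"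
    proof (rule first_touch[OF op bd ch _ _ x t])
      fix y assume y: "y \<in> closure \<Omega>"
      show "h y 0 < 0" using iU[OF y] v0bound[OF y] dp by (simp add: h_def)
    next
      fix y s assume y: "y \<in> frontier \<Omega>" and s: "s \<in> {0..T}"
      have "0 < \<delta> * (1 + s)" using dp s by (intro mult_pos_pos) auto
      thus "h y s < 0" using bU[OF y] fP[OF y] s by (simp add: h_def)
    next
      show "0 \<le> h x t" using nc by (simp add: h_def)
    qed
    then obtain xs ts where xs: "xs \<in> \<Omega>" and ts: "0 < ts" "ts \<le> T" and h0: "h xs ts = 0"
      and hle: "\<And>y. y \<in> closure \<Omega> \<Longrightarrow> h y ts \<le> 0" and hlt: "\<And>s. 0 \<le> s \<Longrightarrow> s < ts \<Longrightarrow> h xs s < 0"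
      by blast
    obtain r where r: "r > 0" "ball xs r \<subseteq> \<Omega>" using op xs open_contains_ball by blast
    have "1 * lap (\<lambda>y. u y ts) xs + (- Lr) * lap \<Phi> xs \<le> 0"
    proof (rule lap_compare[OF CU CP op xs r(1)])
      show "0 \<le> ts" using ts by simp
      fix y assume "y \<in> ball xs r"
      hence "y \<in> closure \<Omega>" using r closure_subset by blast
      thus "1 * u y ts + - Lr * \<Phi> y \<le> 1 * u xs ts + - Lr * \<Phi> xs"
        using hle[of y] h0 by (simp add: h_def)
    qed
    hence lapU: "lap (\<lambda>y. u y ts) xs \<le> - Lr" using lP[OF xs] by simp
    define D where "D = u xs ts * lap (\<lambda>y. u y ts) xs + u xs ts * rho e (dirichlet \<Omega> (\<lambda>y. u y ts))"
    have "((\<lambda>s. h xs s) has_real_derivative D - \<delta>) (at ts)"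
      unfolding h_def using eqU[OF xs ts(1)] by (auto simp: D_def intro!: derivative_eq_intros)
    hence "D - \<delta> \<ge> 0" by (rule time_touch) (use ts h0 hlt in auto)
    moreover have "D \<le> 0"
    proof -
      have U: "u xs ts \<ge> 0" using h0 Ppos[OF xs] LrM M dp ts e
        by (simp add: h_def)
      have "lap (\<lambda>y. u y ts) xs + rho e (dirichlet \<Omega> (\<lambda>y. u y ts)) \<le> 0"
        using lapU rho_le[of ts] ts LrM by simp
      hence "u xs ts * (lap (\<lambda>y. u y ts) xs + rho e (dirichlet \<Omega> (\<lambda>y. u y ts))) \<le> 0"
        using U by (simp add: mult_nonneg_nonpos)
      thus ?thesis by (simp add: D_def algebra_simps)
    qed
    ultimately show False using dp by simp
  qed
  have lower: "u x t \<ge> e - \<delta> * (1 + t)"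
    if dp: "\<delta> > 0" and dT: "\<delta> * (1 + T) < e" and x: "x \<in> closure \<Omega>" and t: "t \<in> {0..T}" for \<delta> x t
  proof (rule ccontr)
    assume nc: "\<not> ?thesis"
    define h where "h = (\<lambda>x t. e - \<delta> * (1 + t) - u x t)"
    have ch: "continuous_on (closure \<Omega> \<times> {0..T}) (\<lambda>(x, t). h x t)"
    proof -
      have "continuous_on (closure \<Omega> \<times> {0..T}) (\<lambda>p. e - \<delta> * (1 + snd p) - (\<lambda>(x, t). u x t) p)"
        by (intro continuous_intros contUT)
      thus ?thesis by (simp add: h_def case_prod_beta)
    qed
    have "\<exists>x\<in>\<Omega>. \<exists>t. 0 < t \<and> t \<le> T \<and> h x t = 0 \<and> (\<forall>y\<in>closure \<Omega>. h y t \<le> 0)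
            \<and> (\<forall>s. 0 \<le> s \<and> s < t \<longrightarrow> h x s < 0)"
    proof (rule first_touch[OF op bd ch _ _ x t])
      fix y assume y: "y \<in> closure \<Omega>"
      show "h y 0 < 0" using iU[OF y] v0ge'[OF y] dp by (simp add: h_def)
    next
      fix y s assume y: "y \<in> frontier \<Omega>" and s: "s \<in> {0..T}"
      have "0 < \<delta> * (1 + s)" using dp s by (intro mult_pos_pos) auto
      thus "h y s < 0" using bU[OF y] s by (simp add: h_def)
    next
      show "0 \<le> h x t" using nc by (simp add: h_def)
    qed
    then obtain xs ts where xs: "xs \<in> \<Omega>" and ts: "0 < ts" "ts \<le> T" and h0: "h xs ts = 0"
      and hle: "\<And>y. y \<in> closure \<Omega> \<Longrightarrow> h y ts \<le> 0" and hlt: "\<And>s. 0 \<le> s \<Longrightarrow> s < ts \<Longrightarrow> h xs s < 0"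
      by blast
    obtain r where r: "r > 0" "ball xs r \<subseteq> \<Omega>" using op xs open_contains_ball by blast
    have "(-1) * lap (\<lambda>y. u y ts) xs + 0 * lap (\<lambda>y. u y ts) xs \<le> 0"
    proof (rule lap_compare[OF CU CU op xs r(1)])
      show "0 \<le> ts" using ts by simp
      show "0 \<le> ts" using ts by simp
      fix y assume "y \<in> ball xs r"
      hence "y \<in> closure \<Omega>" using r closure_subset by blast
      thus "(-1) * u y ts + 0 * u y ts \<le> (-1) * u xs ts + 0 * u xs ts"
        using hle[of y] h0 by (simp add: h_def)
    qed
    hence lapU: "lap (\<lambda>y. u y ts) xs \<ge> 0" by simp
    define D where "D = u xs ts * lap (\<lambda>y. u y ts) xs + u xs ts * rho e (dirichlet \<Omega> (\<lambda>y. u y ts))"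
    have "((\<lambda>s. h xs s) has_real_derivative - \<delta> - D) (at ts)"
      unfolding h_def using eqU[OF xs ts(1)] by (auto simp: D_def intro!: derivative_eq_intros)
    hence "- \<delta> - D \<ge> 0" by (rule time_touch) (use ts h0 hlt in auto)
    moreover have "D \<ge> 0"
    proof -
      have "\<delta> * (1 + ts) \<le> \<delta> * (1 + T)" using ts dp by (intro mult_left_mono) auto
      hence U: "u xs ts \<ge> 0" using h0 dT by (simp add: h_def)
      have "u xs ts * (lap (\<lambda>y. u y ts) xs + rho e (dirichlet \<Omega> (\<lambda>y. u y ts))) \<ge> 0"
        using U lapU rho_ge[of ts] by simp
      thus ?thesis by (simp add: D_def algebra_simps)
    qed
    ultimately show False using dp by simp
  qed
  have ptw: "0 \<le> u x t - e \<and> u x t - e \<le> Lr * \<Phi> x"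
    if x: "x \<in> closure \<Omega>" and t: "t \<in> {0..T}" for x t
  proof
    show "0 \<le> u x t - e"
    proof (rule ccontr)
      assume "\<not> 0 \<le> u x t - e"
      hence a: "e - u x t > 0" by simp
      define \<delta> where "\<delta> = min (e - u x t) e / (2 * (1 + T))"
      have dp: "\<delta> > 0" using a e T by (simp add: \<delta>_def)
      have d1: "\<delta> * (1 + T) = min (e - u x t) e / 2" using T by (simp add: \<delta>_def field_simps)
      have dT: "\<delta> * (1 + T) < e" using d1 e a by (simp add: min_def split: if_splits)
      have "\<delta> * (1 + t) \<le> \<delta> * (1 + T)" using t dp by (intro mult_left_mono) auto
      moreover have "min (e - u x t) e / 2 < e - u x t" using a by (simp add: min_def)
      ultimately have "\<delta> * (1 + t) < e - u x t" using d1 by linarith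
      thus False using lower[OF dp dT x t] by linarith
    qed
    show "u x t - e \<le> Lr * \<Phi> x"
    proof (rule ccontr)
      assume "\<not> u x t - e \<le> Lr * \<Phi> x"
      hence a: "u x t - e - Lr * \<Phi> x > 0" by simp
      define \<delta> where "\<delta> = (u x t - e - Lr * \<Phi> x) / (2 * (1 + t))"
      have tp: "1 + t > 0" using t by simp
      have dp: "\<delta> > 0" using a tp by (simp add: \<delta>_def)
      have "2 * (\<delta> * (1 + t)) = u x t - e - Lr * \<Phi> x" using tp by (simp add: \<delta>_def field_simps)
      thus False using upper[OF dp x t] a by linarith
    qed
  qed
  show ?thesis
  proof
    fix t assume t: "t \<in> {0..T}"
    define f where "f = (\<lambda>x. (u x t - e) / \<Phi> x)"
    have cf: "continuous_on \<Omega> f" unfolding f_def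
      by (auto intro!: continuous_intros cont_slice2[OF contU] continuous_on_subset[OF cP] closure_subset
           dest: Ppos simp: less_imp_neq[OF Ppos, symmetric] t) (use t in simp)
    have mf: "f \<in> borel_measurable (lebesgue_on \<Omega>)"
      by (rule continuous_imp_measurable_on_sets_lebesgue[OF cf]) (use op in simp)
    have "phi_norm \<Omega> \<Phi> (\<lambda>x. u x t - eps j) \<le> ereal Lr"
      unfolding phi_norm_def e_def[symmetric]
    proof (rule esssup_I)
      show "(\<lambda>x. ereal \<bar>(u x t - e) / \<Phi> x\<bar>) \<in> borel_measurable (lebesgue_on \<Omega>)"
        using mf unfolding f_def by measurable
      show "AE x in lebesgue_on \<Omega>. ereal \<bar>(u x t - e) / \<Phi> x\<bar> \<le> ereal Lr"
      proof (rule AE_I2)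
        fix x assume "x \<in> space (lebesgue_on \<Omega>)"
        hence x: "x \<in> \<Omega>" by simp
        have p: "\<Phi> x > 0" by (rule Ppos[OF x])
        have "0 \<le> u x t - e" "u x t - e \<le> Lr * \<Phi> x" using ptw[OF _ t, of x] x closure_subset by auto
        hence "\<bar>(u x t - e) / \<Phi> x\<bar> \<le> Lr" using p by (simp add: divide_le_eq mult.commute)
        thus "ereal \<bar>(u x t - e) / \<Phi> x\<bar> \<le> ereal Lr" by simp
      qed
    qed
    thus "phi_norm \<Omega> \<Phi> (\<lambda>x. u x t - eps j) \<le> max (ereal M) (phi_norm \<Omega> \<Phi> (\<lambda>x. u0 (eps j) x - eps j))"
      using Lr by (simp add: L0_def v0_def e_def)
  qed
qed
end
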